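(* Let $L_{\max},V_{\max},S,N,B,D>0$ and, for vehicle density $\lambda\in[0,L_{\max}]$, let $\mu(\lambda)=\frac{V_{\max}}{S}\left(1-\frac{\lambda}{L_{\max}}\right)$ (linear speed-density relationship $V(\lambda)=V_{\max}(1-\lambda/L_{\max})$, $\mu=V/S$). In the short deadline regime, where the average deadline violation probability is $\exp\left(-\frac{\lambda S}{2N}B\mu(\lambda)^2D^2\right)$, the vehicle density minimizing the average deadline violation probability over $0\le\lambda\le L_{\max}$ is $L^\dagger=\frac{L_{\max}}{3}$.
   Context: $V_{\max}$ is the speed limit, $L_{\max}$ the traffic-jam vehicle density, $S$ the road length, $B$ the number of roadside units, $N$ the number of tasks, $D$ the deadline, and $\mu$ the rate at which a vehicle meets a given roadside unit. *)

theory Defs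
  imports Complex_Main
begin

definition mu :: "real \<Rightarrow> real \<Rightarrow> real \<Rightarrow> real \<Rightarrow> real" where
  "mu Vmax S Lmax lam = Vmax / S * (1 - lam / Lmax)"

definition avg_dvp :: "real \<Rightarrow> real \<Rightarrow> real \<Rightarrow> real \<Rightarrow> real \<Rightarrow> real \<Rightarrow> real \<Rightarrow> real" where
  "avg_dvp Vmax S Lmax N B D lam =
     exp (- (lam * S / (2 * N)) * B * (mu Vmax S Lmax lam)^2 * D^2)"

end

theory Submission
  imports Defs
begin

lemma key:
  fixes L t :: real
  assumes "L > 0" "0 \<le> t" "t \<le> L"
  shows "L * 4 / 27 - t * (1 - t / L)^2 = (t/L - 1/3)^2 * (4/3 - t/L) * L"
  using assms by (simp add: field_simps power2_eq_square)

lemma avg_eq: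
  assumes "S > 0" "N > 0" "Lmax > 0"
  shows "avg_dvp Vmax S Lmax N B D lam =
     exp (- (B * Vmax^2 * D^2 / (2 * N * S)) * (lam * (1 - lam / Lmax)^2))"
  unfolding avg_dvp_def mu_def using assms
  by (simp add: field_simps power2_eq_square)

theorem corollary2:
  fixes Lmax Vmax S N B D :: real
  assumes "Lmax > 0" "Vmax > 0" "S > 0" "N > 0" "B > 0" "D > 0"
  shows "Lmax / 3 \<in> {0..Lmax} \<and>
         (\<forall>lam\<in>{0..Lmax}. avg_dvp Vmax S Lmax N B D (Lmax / 3) \<le> avg_dvp Vmax S Lmax N B D lam) \<and>
         (\<forall>lam\<in>{0..Lmax}. avg_dvp Vmax S Lmax N B D lam = avg_dvp Vmax S Lmax N B D (Lmax / 3) \<longrightarrow> lam = Lmax / 3)"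
proof -
  define C where "C = B * Vmax^2 * D^2 / (2 * N * S)"
  have C: "C > 0" unfolding C_def using assms by simp
  define g where "g = (\<lambda>t::real. t * (1 - t / Lmax)^2)"
  have g3: "g (Lmax/3) = Lmax * 4 / 27" unfolding g_def using assms
    by (simp add: field_simps power2_eq_square)
  have A: "avg_dvp Vmax S Lmax N B D t = exp (- C * g t)" for t
    using avg_eq[OF assms(3,4,1)] unfolding C_def g_def by simp
  have ge: "g t \<le> g (Lmax/3)" and eq: "g t = g (Lmax/3) \<Longrightarrow> t = Lmax/3"
    if "t \<in> {0..Lmax}" for t
  proof -
    have k: "g (Lmax/3) - g t = (t/Lmax - 1/3)^2 * (4/3 - t/Lmax) * Lmax"
      using key[of Lmax t] that assms unfolding g3 unfolding g_def by auto
    have p: "4/3 - t/Lmax > 0" using that assms by (simp add: field_simps)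
    have "0 \<le> (t/Lmax - 1/3)^2 * (4/3 - t/Lmax) * Lmax" using p assms by simp
    then show "g t \<le> g (Lmax/3)" using k by linarith
    assume "g t = g (Lmax/3)"
    hence "(t/Lmax - 1/3)^2 * (4/3 - t/Lmax) * Lmax = 0" using k by simp
    hence "t/Lmax - 1/3 = 0" using p assms by simp
    thus "t = Lmax/3" using assms by (simp add: field_simps)
  qed
  show ?thesis
  proof (intro conjI ballI impI)
    show "Lmax / 3 \<in> {0..Lmax}" using assms by simp
  next
    fix lam assume l: "lam \<in> {0..Lmax}"
    show "avg_dvp Vmax S Lmax N B D (Lmax / 3) \<le> avg_dvp Vmax S Lmax N B D lam"
      unfolding A using ge[OF l] C by (simp add: mult_left_mono)
  next
    fix lam assume l: "lam \<in> {0..Lmax}"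
      and e: "avg_dvp Vmax S Lmax N B D lam = avg_dvp Vmax S Lmax N B D (Lmax / 3)"
    from e have "C * g lam = C * g (Lmax/3)" unfolding A by simp
    hence "g lam = g (Lmax/3)" using C by simp
    thus "lam = Lmax/3" using eq[OF l] by simp
  qed
qed

end
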